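(* Let $a$ be a non-degenerate arrow environment, let $x,y\in\mathbb Z_+$ and $l\ge1$. If the process $Z^+$ on $a$ with initial value $Z^+_0=x$ satisfies $Z^+_l\ge y$, then the process $Z^-$ on the shifted arrow environment $\theta^{l-1}a$ with initial value $Z^-_0=y$ satisfies $Z^-_l\le x$.
   Context: Notation: $\mathbb N=\{1,2,\dots\}$, $\mathbb Z_+=\{0,1,2,\dots\}$. An arrow environment is $a\in\{0,1\}^{\mathbb Z\times\mathbb N}$; for $z\in\mathbb Z$, $(\theta^z a)(x,i)=a(x+z,i)$. A sequence $b\in\{0,1\}^{\mathbb N}$ is non-degenerate if $b(i)\ne b(i+1)$ for infinitely many $i$; $a$ is non-degenerate if every $a(x,\cdot)$ is. For non-degenerate $b$: $U^+_b(0)=0$ and for $x\ge1$, $U^+_b(x)$ is the number of indices $i$ with $b(i)=1$ that precede the $x$-th index $j$ with $b(j)=0$; $U^-_b(x)$ is defined the same way with the roles of $0$ and $1$ exchanged. For non-degenerate $a$ and $y\in\mathbb Z_+$, the processes on $a$ with initial value $y$ are $Z^+_0=y$, $Z^+_n=U^+_{a(n-1,\cdot)}(Z^+_{n-1})$ and $Z^-_0=y$, $Z^-_n=U^-_{a(1-n,\cdot)}(Z^-_{n-1})$ for $n\ge1$. *)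

theory Defs
  imports Main
begin

text \<open>Arrow environments: a value 1 is encoded as True, 0 as False.
  Only indices i \<ge> 1 of a sequence b :: nat \<Rightarrow> bool are meaningful (index set N = {1,2,...}).\<close>

type_synonym arrow_env = "int \<Rightarrow> nat \<Rightarrow> bool"

definition nondeg_seq :: "(nat \<Rightarrow> bool) \<Rightarrow> bool" where
  "nondeg_seq b \<longleftrightarrow> infinite {i. 1 \<le> i \<and> b i \<noteq> b (Suc i)}"

definition nondeg_env :: "arrow_env \<Rightarrow> bool" where
  "nondeg_env a \<longleftrightarrow> (\<forall>x. nondeg_seq (a x))"

definition shift :: "int \<Rightarrow> arrow_env \<Rightarrow> arrow_env" where
  "shift z a = (\<lambda>x i. a (x + z) i)"

definition nth_index :: "(nat \<Rightarrow> bool) \<Rightarrow> bool \<Rightarrow> nat \<Rightarrow> nat" where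
  "nth_index b v x = (THE j. 1 \<le> j \<and> b j = v \<and> card {k. 1 \<le> k \<and> k \<le> j \<and> b k = v} = x)"

definition U :: "(nat \<Rightarrow> bool) \<Rightarrow> bool \<Rightarrow> nat \<Rightarrow> nat" where
  "U b v x = (if x = 0 then 0
     else card {i. 1 \<le> i \<and> i < nth_index b (\<not> v) x \<and> b i = v})"

definition Uplus :: "(nat \<Rightarrow> bool) \<Rightarrow> nat \<Rightarrow> nat" where
  "Uplus b = U b True"

definition Uminus :: "(nat \<Rightarrow> bool) \<Rightarrow> nat \<Rightarrow> nat" where
  "Uminus b = U b False"

primrec Zplus :: "arrow_env \<Rightarrow> nat \<Rightarrow> nat \<Rightarrow> nat" where
  "Zplus a y 0 = y"
| "Zplus a y (Suc n) = Uplus (a (int n)) (Zplus a y n)"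

primrec Zminus :: "arrow_env \<Rightarrow> nat \<Rightarrow> nat \<Rightarrow> nat" where
  "Zminus a y 0 = y"
| "Zminus a y (Suc n) = Uminus (a (1 - int (Suc n))) (Zminus a y n)"

end

theory Submission
  imports Defs
begin

definition cnt :: "(nat \<Rightarrow> bool) \<Rightarrow> bool \<Rightarrow> nat \<Rightarrow> nat" where
  "cnt b v t = card {k. 1 \<le> k \<and> k \<le> t \<and> b k = v}"

lemma fin_set: "finite {k::nat. 1 \<le> k \<and> k \<le> t \<and> P k}"
proof -
  have "{k. 1 \<le> k \<and> k \<le> t \<and> P k} \<subseteq> {..t}" by auto
  then show ?thesis using finite_subset by blast
qed

lemma psub:
  fixes j t :: nat
  assumes "j < t" "b t = v"
  shows "{k. 1 \<le> k \<and> k \<le> j \<and> b k = v} \<subset> {k. 1 \<le> k \<and> k \<le> t \<and> b k = v}"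
proof (rule psubsetI)
  show "{k. 1 \<le> k \<and> k \<le> j \<and> b k = v} \<subseteq> {k. 1 \<le> k \<and> k \<le> t \<and> b k = v}"
  proof
    fix k assume "k \<in> {k. 1 \<le> k \<and> k \<le> j \<and> b k = v}"
    then show "k \<in> {k. 1 \<le> k \<and> k \<le> t \<and> b k = v}" using assms(1) by simp
  qed
  have "t \<in> {k. 1 \<le> k \<and> k \<le> t \<and> b k = v}" using assms by auto
  moreover have "t \<notin> {k. 1 \<le> k \<and> k \<le> j \<and> b k = v}" using assms by auto
  ultimately show "{k. 1 \<le> k \<and> k \<le> j \<and> b k = v} \<noteq> {k. 1 \<le> k \<and> k \<le> t \<and> b k = v}" by blast
qed

lemma cnt_0: "cnt b v 0 = 0"
  unfolding cnt_def by simp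

lemma cnt_Suc: "cnt b v (Suc t) = cnt b v t + (if b (Suc t) = v then 1 else 0)"
proof -
  have "{k. 1 \<le> k \<and> k \<le> Suc t \<and> b k = v} =
        {k. 1 \<le> k \<and> k \<le> t \<and> b k = v} \<union> (if b (Suc t) = v then {Suc t} else {})"
    by (auto simp: le_Suc_eq)
  then show ?thesis unfolding cnt_def using fin_set[of t "\<lambda>k. b k = v"]
    by (auto simp: card_insert_if)
qed

lemma cnt_mono: "s \<le> t \<Longrightarrow> cnt b v s \<le> cnt b v t"
  unfolding cnt_def by (rule card_mono[OF fin_set]) auto

lemma infinite_v:
  assumes "nondeg_seq b"
  shows "infinite {i. 1 \<le> i \<and> b i = v}"
proof
  assume f: "finite {i. 1 \<le> i \<and> b i = v}"
  then obtain N where N: "\<forall>i\<in>{i. 1 \<le> i \<and> b i = v}. i \<le> N"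
    using finite_nat_set_iff_bounded_le by blast
  have "{i. 1 \<le> i \<and> b i \<noteq> b (Suc i)} \<subseteq> {..N}"
  proof
    fix i assume i: "i \<in> {i. 1 \<le> i \<and> b i \<noteq> b (Suc i)}"
    show "i \<in> {..N}"
    proof (rule ccontr)
      assume "i \<notin> {..N}"
      then have "i > N" by simp
      have i1: "1 \<le> i" using i by simp
      have N': "\<And>k. 1 \<le> k \<Longrightarrow> b k = v \<Longrightarrow> k \<le> N" using N by blast
      have "b i \<noteq> v" using N'[of i] i1 \<open>i > N\<close> by linarith
      moreover have "b (Suc i) \<noteq> v" using N'[of "Suc i"] \<open>i > N\<close> by linarith
      ultimately show False using i by auto
    qed
  qed
  then show False using assms unfolding nondeg_seq_def using finite_subset by blast
qed

lemma cnt_unbounded: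
  assumes "nondeg_seq b"
  shows "\<exists>t. cnt b v t \<ge> x"
proof (induction x)
  case 0 then show ?case by simp
next
  case (Suc x)
  then obtain t where t: "cnt b v t \<ge> x" by blast
  obtain i where i: "i > t" "1 \<le> i" "b i = v"
  proof -
    have "\<not> (\<exists>m. \<forall>n\<in>{i. 1 \<le> i \<and> b i = v}. n \<le> m)"
    proof
      assume "\<exists>m. \<forall>n\<in>{i. 1 \<le> i \<and> b i = v}. n \<le> m"
      then have "finite {i. 1 \<le> i \<and> b i = v}" by (rule finite_nat_set_iff_bounded_le[THEN iffD2])
      then show False using infinite_v[OF assms, of v] by contradiction
    qed
    then obtain n where "n \<in> {i. 1 \<le> i \<and> b i = v}" "\<not> n \<le> t" by blast
    then show ?thesis by (intro that[of n]) auto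
  qed
  have "{k. 1 \<le> k \<and> k \<le> t \<and> b k = v} \<subset> {k. 1 \<le> k \<and> k \<le> i \<and> b k = v}"
    using psub[of t i b v] i by simp
  then have "cnt b v t < cnt b v i" unfolding cnt_def by (rule psubset_card_mono[OF fin_set])
  then show ?case using t by (intro exI[of _ i]) simp
qed

lemma nth_index_prop:
  assumes "nondeg_seq b" "1 \<le> x"
  shows "1 \<le> nth_index b v x \<and> b (nth_index b v x) = v \<and> cnt b v (nth_index b v x) = x"
proof -
  let ?P = "\<lambda>j. 1 \<le> j \<and> b j = v \<and> card {k. 1 \<le> k \<and> k \<le> j \<and> b k = v} = x"
  obtain t0 where "cnt b v t0 \<ge> x" using cnt_unbounded[OF assms(1)] by blast
  define t where "t = (LEAST t. cnt b v t \<ge> x)"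
  have ct: "cnt b v t \<ge> x" unfolding t_def by (rule LeastI) fact
  have t0: "t \<noteq> 0" using ct assms(2) cnt_0[of b v] by (cases t) auto
  then obtain s where s: "t = Suc s" by (cases t) auto
  have "s < t" using s by simp
  then have ns: "\<not> cnt b v s \<ge> x" unfolding t_def by (rule not_less_Least)
  have bt: "b t = v"
  proof (rule ccontr)
    assume "b t \<noteq> v"
    then have "cnt b v t = cnt b v s" using cnt_Suc[of b v s] s by simp
    then show False using ns ct by simp
  qed
  have "cnt b v t = x" using cnt_Suc[of b v s] s bt ns ct by simp
  then have ex: "?P t" using bt s unfolding cnt_def by simp
  have uniq: "j = t" if "?P j" for j
  proof (rule ccontr)
    assume "j \<noteq> t"
    then consider "j < t" | "t < j" by linarith
    then show False
    proof cases
      case 1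
      have "{k. 1 \<le> k \<and> k \<le> j \<and> b k = v} \<subset> {k. 1 \<le> k \<and> k \<le> t \<and> b k = v}"
        using psub[of j t b v] 1 bt by simp
      from psubset_card_mono[OF fin_set this] show False using that ex by simp
    next
      case 2
      have "{k. 1 \<le> k \<and> k \<le> t \<and> b k = v} \<subset> {k. 1 \<le> k \<and> k \<le> j \<and> b k = v}"
        using psub[of t j b v] 2 that by simp
      from psubset_card_mono[OF fin_set this] show False using that ex by simp
    qed
  qed
  have "nth_index b v x = t" unfolding nth_index_def
    using ex uniq by (rule the_equality)
  then show ?thesis using ex unfolding cnt_def by simp
qed

lemma key:
  assumes nd: "nondeg_seq b" and h: "Uplus b x \<ge> y"
  shows "Uminus b y \<le> x"
proof (cases "y = 0")
  case True then show ?thesis by (simp add: Uminus_def U_def)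
next
  case False
  then have x1: "1 \<le> x" using h by (cases "x = 0") (auto simp: Uplus_def U_def)
  define j where "j = nth_index b False x"
  define m where "m = nth_index b True y"
  have J: "1 \<le> j" "b j = False" "cnt b False j = x"
    using nth_index_prop[OF nd x1, of False] unfolding j_def by auto
  have M: "1 \<le> m" "b m = True" "cnt b True m = y"
    using nth_index_prop[OF nd, of y True] False unfolding m_def by auto
  have hy: "card {i. 1 \<le> i \<and> i < j \<and> b i = True} \<ge> y"
    using h x1 unfolding Uplus_def U_def j_def by simp
  have mj: "m < j"
  proof (rule ccontr)
    assume "\<not> m < j"
    then have sub: "{i. 1 \<le> i \<and> i < j \<and> b i = True} \<subseteq> {i. 1 \<le> i \<and> i \<le> m \<and> b i = True} - {m}"
      by auto
    have "card ({i. 1 \<le> i \<and> i \<le> m \<and> b i = True} - {m}) = y - 1"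
      using M unfolding cnt_def by (simp add: fin_set)
    moreover have "card {i. 1 \<le> i \<and> i < j \<and> b i = True} \<le> card ({i. 1 \<le> i \<and> i \<le> m \<and> b i = True} - {m})"
      by (rule card_mono[OF _ sub]) (simp add: fin_set)
    ultimately show False using hy False by linarith
  qed
  have "Uminus b y = card {i. 1 \<le> i \<and> i < m \<and> b i = False}"
    using False unfolding Uminus_def U_def m_def by simp
  also have "\<dots> \<le> cnt b False j" unfolding cnt_def
    by (rule card_mono[OF fin_set]) (use mj in auto)
  finally show ?thesis using J by simp
qed

theorem lemma2p6:
  fixes a :: arrow_env and x y l :: nat
  assumes "nondeg_env a" and "1 \<le> l" and "Zplus a x l \<ge> y"
  shows "Zminus (shift (int l - 1) a) y l \<le> x"
proof -
  have "k \<le> l \<Longrightarrow> Zminus (shift (int l - 1) a) y k \<le> Zplus a x (l - k)" for k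
  proof (induction k)
    case 0 then show ?case using assms(3) by simp
  next
    case (Suc k)
    have e1: "shift (int l - 1) a (- int k) = a (int (l - Suc k))"
      using Suc.prems unfolding shift_def by (auto simp: of_nat_diff algebra_simps)
    have e2: "l - k = Suc (l - Suc k)" using Suc.prems by simp
    have "Zminus (shift (int l - 1) a) y k \<le> Uplus (a (int (l - Suc k))) (Zplus a x (l - Suc k))"
      using Suc by (simp add: e2)
    then have "Uminus (a (int (l - Suc k))) (Zminus (shift (int l - 1) a) y k) \<le> Zplus a x (l - Suc k)"
      using key assms(1) unfolding nondeg_env_def by blast
    then show ?case by (simp add: e1)
  qed
  from this[of l] show ?thesis by simp
qed

end
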